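(* Let $L$ be a finite-dimensional Lie algebra over a field $F$ which is not two-generated. Then for each maximal subalgebra $M$ of $L$ and each non-zero element $x\in M$ there exists a maximal subalgebra $S$ of $L$ with $S\neq M$ and $x\in S$. If moreover $F$ is infinite, then each element of $L$ lies in infinitely many maximal subalgebras of $L$.
   Context: A Lie algebra is two-generated if it is generated as a Lie algebra by two of its elements. *)

theory Defs
  imports Complex_Main
begin

definition lie_algebra ::
  "('f::field \<Rightarrow> 'v::ab_group_add \<Rightarrow> 'v) \<Rightarrow> ('v \<Rightarrow> 'v \<Rightarrow> 'v) \<Rightarrow> bool" where
  "lie_algebra scale br \<longleftrightarrow>
     vector_space scale \<and>
     (\<forall>x y z. br (x + y) z = br x z + br y z) \<and>
     (\<forall>x y z. br x (y + z) = br x y + br x z) \<and>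
     (\<forall>a x y. br (scale a x) y = scale a (br x y)) \<and>
     (\<forall>a x y. br x (scale a y) = scale a (br x y)) \<and>
     (\<forall>x. br x x = 0) \<and>
     (\<forall>x y z. br x (br y z) + br y (br z x) + br z (br x y) = 0)"

definition finite_dim :: "('f::field \<Rightarrow> 'v::ab_group_add \<Rightarrow> 'v) \<Rightarrow> bool" where
  "finite_dim scale \<longleftrightarrow> (\<exists>B. finite B \<and> module.span scale B = UNIV)"

definition lie_subalgebra ::
  "('f::field \<Rightarrow> 'v::ab_group_add \<Rightarrow> 'v) \<Rightarrow> ('v \<Rightarrow> 'v \<Rightarrow> 'v) \<Rightarrow> 'v set \<Rightarrow> bool" where
  "lie_subalgebra scale br S \<longleftrightarrow> module.subspace scale S \<and> (\<forall>x\<in>S. \<forall>y\<in>S. br x y \<in> S)"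

definition lie_generated ::
  "('f::field \<Rightarrow> 'v::ab_group_add \<Rightarrow> 'v) \<Rightarrow> ('v \<Rightarrow> 'v \<Rightarrow> 'v) \<Rightarrow> 'v set \<Rightarrow> 'v set" where
  "lie_generated scale br X = \<Inter>{S. lie_subalgebra scale br S \<and> X \<subseteq> S}"

definition two_generated ::
  "('f::field \<Rightarrow> 'v::ab_group_add \<Rightarrow> 'v) \<Rightarrow> ('v \<Rightarrow> 'v \<Rightarrow> 'v) \<Rightarrow> bool" where
  "two_generated scale br \<longleftrightarrow> (\<exists>a b. lie_generated scale br {a, b} = UNIV)"

definition maximal_subalgebra ::
  "('f::field \<Rightarrow> 'v::ab_group_add \<Rightarrow> 'v) \<Rightarrow> ('v \<Rightarrow> 'v \<Rightarrow> 'v) \<Rightarrow> 'v set \<Rightarrow> bool" where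
  "maximal_subalgebra scale br M \<longleftrightarrow>
     lie_subalgebra scale br M \<and> M \<noteq> UNIV \<and>
     (\<forall>S. lie_subalgebra scale br S \<and> M \<subseteq> S \<longrightarrow> S = M \<or> S = UNIV)"

end

theory Submission
  imports Defs
begin

context vector_space
begin

lemma not_cover:
  assumes inf: "infinite (UNIV::'a set)"
  shows "finite F \<Longrightarrow> \<forall>S\<in>F. subspace S \<and> S \<noteq> UNIV \<Longrightarrow> \<Union>F \<noteq> UNIV"
proof (induction "card F" arbitrary: F rule: less_induct)
  case less
  show ?case
  proof
    assume cov: "\<Union>F = UNIV"
    have "F \<noteq> {}" using cov by auto
    then obtain S where SF: "S \<in> F" by auto
    let ?G = "F - {S}"
    have "card ?G < card F" using less.prems SF by (meson card_Diff1_less)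
    hence "\<Union>?G \<noteq> UNIV" using less.hyps[of ?G] less.prems by auto
    then obtain u where u: "u \<notin> \<Union>?G" by auto
    hence uS: "u \<in> S" using cov by auto
    obtain v where v: "v \<notin> S" using less.prems SF by auto
    have Ssub: "subspace S" using less.prems SF by auto
    have u0: "u \<noteq> 0"
    proof
      assume "u = 0"
      hence "?G = {}" using u less.prems subspace_0 by blast
      hence "F = {S}" using SF by auto
      thus False using cov v by auto
    qed
    define f where "f = (\<lambda>a. v + scale a u)"
    have fS: "f a \<notin> S" for a
    proof
      assume "f a \<in> S"
      hence "f a - scale a u \<in> S" using subspace_diff[OF Ssub] subspace_scale[OF Ssub uS] by blast
      thus False using v by (simp add: f_def)
    qed
    have "\<forall>a. \<exists>T\<in>?G. f a \<in> T" using fS cov by blast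
    hence U: "(UNIV::'a set) = (\<Union>T\<in>?G. {a. f a \<in> T})" by blast
    have "\<exists>T\<in>?G. infinite {a. f a \<in> T}"
    proof (rule ccontr)
      assume "\<not> ?thesis"
      hence "finite (\<Union>T\<in>?G. {a. f a \<in> T})" using less.prems by auto
      thus False using U inf by simp
    qed
    then obtain T where TG: "T \<in> ?G" and Tinf: "infinite {a. f a \<in> T}" by blast
    then obtain a where a: "a \<in> {a. f a \<in> T}" by (metis finite.emptyI ex_in_conv)
    have "infinite ({a. f a \<in> T} - {a})" using Tinf by simp
    then obtain b where b: "b \<in> {a. f a \<in> T} - {a}" by (metis finite.emptyI ex_in_conv)
    have Tsub: "subspace T" using TG less.prems by auto
    have "f a - f b \<in> T" using a b subspace_diff[OF Tsub] by auto
    moreover have "f a - f b = scale (a - b) u" by (simp add: f_def scale_left_diff_distrib)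
    ultimately have "scale (a - b) u \<in> T" by simp
    hence "scale (inverse (a - b)) (scale (a - b) u) \<in> T" using subspace_scale[OF Tsub] by blast
    moreover have "a - b \<noteq> 0" using b by auto
    ultimately have "u \<in> T" by simp
    thus False using u TG by blast
  qed
qed

end

lemma fdvs:
  assumes "vector_space scale" "finite_dim scale"
  shows "\<exists>Bs. finite_dimensional_vector_space scale Bs"
proof -
  interpret vector_space scale by fact
  obtain B where B: "finite B" "span B = UNIV" using assms(2) unfolding finite_dim_def by auto
  obtain C where C: "C \<subseteq> B" "independent C" "B \<subseteq> span C"
    using maximal_independent_subset[of B] by blast
  have "span C = UNIV" using C B by (metis span_mono span_span top.extremum_uniqueI)
  hence "finite_dimensional_vector_space scale C"
    using C B by unfold_locales (auto intro: finite_subset)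
  thus ?thesis by blast
qed

theorem lemma4p3:
  fixes scale :: "'f::field \<Rightarrow> 'v::ab_group_add \<Rightarrow> 'v"
    and br :: "'v \<Rightarrow> 'v \<Rightarrow> 'v"
  assumes "lie_algebra scale br"
    and "finite_dim scale"
    and "\<not> two_generated scale br"
  shows "(\<forall>M x. maximal_subalgebra scale br M \<and> x \<in> M \<and> x \<noteq> 0 \<longrightarrow>
            (\<exists>S. maximal_subalgebra scale br S \<and> S \<noteq> M \<and> x \<in> S))
       \<and> (infinite (UNIV :: 'f set) \<longrightarrow>
            (\<forall>x. infinite {S. maximal_subalgebra scale br S \<and> x \<in> S}))"
proof -
  have vs: "vector_space scale" using assms(1) unfolding lie_algebra_def by auto
  obtain Bs where "finite_dimensional_vector_space scale Bs" using fdvs[OF vs assms(2)] by blast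
  then interpret finite_dimensional_vector_space scale Bs .
  have gen: "lie_subalgebra scale br (lie_generated scale br X) \<and> X \<subseteq> lie_generated scale br X" for X
  proof -
    have "subspace (lie_generated scale br X)"
      unfolding lie_generated_def lie_subalgebra_def by (rule subspace_Inter) auto
    moreover have "\<forall>x\<in>lie_generated scale br X. \<forall>y\<in>lie_generated scale br X. br x y \<in> lie_generated scale br X"
      unfolding lie_generated_def lie_subalgebra_def by blast
    ultimately show ?thesis unfolding lie_subalgebra_def lie_generated_def by blast
  qed
  have exmax: "\<exists>M. maximal_subalgebra scale br M \<and> A \<subseteq> M"
    if A: "lie_subalgebra scale br A" "A \<noteq> UNIV" for A
  proof -
    let ?D = "{dim S | S. lie_subalgebra scale br S \<and> A \<subseteq> S \<and> S \<noteq> UNIV}"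
    have fin: "finite ?D"
      by (rule finite_subset[of _ "{..dimension}"]) (auto simp: dim_subset_UNIV)
    have ne: "dim A \<in> ?D" using A by blast
    have "Max ?D \<in> ?D" using fin ne by (intro Max_in) auto
    then obtain S where S: "lie_subalgebra scale br S" "A \<subseteq> S" "S \<noteq> UNIV" "dim S = Max ?D"
      by (smt (verit, ccfv_SIG) mem_Collect_eq)
    have "maximal_subalgebra scale br S"
      unfolding maximal_subalgebra_def
    proof (intro conjI allI impI)
      fix T assume T: "lie_subalgebra scale br T \<and> S \<subseteq> T"
      show "T = S \<or> T = UNIV"
      proof (cases "T = UNIV")
        case False
        hence "dim T \<in> ?D" using T S by blast
        hence "dim T \<le> dim S" using fin S(4) by simp
        hence "S = T" using T S(1) subspace_dim_equal unfolding lie_subalgebra_def by blast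
        thus ?thesis by simp
      qed simp
    qed (use S in auto)
    thus ?thesis using S by blast
  qed
  have pr2: "\<exists>S. maximal_subalgebra scale br S \<and> x \<in> S \<and> y \<in> S" for x y
  proof -
    have "lie_generated scale br {x, y} \<noteq> UNIV" using assms(3) unfolding two_generated_def by blast
    then obtain S where "maximal_subalgebra scale br S" "lie_generated scale br {x, y} \<subseteq> S"
      using exmax gen by blast
    thus ?thesis using gen[of "{x,y}"] by blast
  qed
  have P1: "\<forall>M x. maximal_subalgebra scale br M \<and> x \<in> M \<and> x \<noteq> 0 \<longrightarrow>
            (\<exists>S. maximal_subalgebra scale br S \<and> S \<noteq> M \<and> x \<in> S)"
  proof (intro allI impI)
    fix M x assume H: "maximal_subalgebra scale br M \<and> x \<in> M \<and> x \<noteq> 0"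
    then obtain y where y: "y \<notin> M" unfolding maximal_subalgebra_def by auto
    from pr2[of x y] obtain S where "maximal_subalgebra scale br S" "x \<in> S" "y \<in> S" by blast
    thus "\<exists>S. maximal_subalgebra scale br S \<and> S \<noteq> M \<and> x \<in> S" using y by blast
  qed
  have P2: "infinite {S. maximal_subalgebra scale br S \<and> x \<in> S}"
    if inf: "infinite (UNIV :: 'f set)" for x
  proof
    let ?F = "{S. maximal_subalgebra scale br S \<and> x \<in> S}"
    assume fin: "finite ?F"
    have "\<forall>S\<in>?F. subspace S \<and> S \<noteq> UNIV"
      unfolding maximal_subalgebra_def lie_subalgebra_def by auto
    hence "\<Union>?F \<noteq> UNIV" using not_cover[OF inf fin] by blast
    moreover have "\<Union>?F = UNIV" using pr2[of x] by blast
    ultimately show False by simp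
  qed
  show ?thesis using P1 P2 by blast
qed

end
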